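(* Let $d\ge2$, $\gamma^\mu\in\mathbb{S}^d$ with zero diagonal and $\gamma^\mu_{ij}>0$ for all $i\ne j$, and let $b^\mu_i(\mu)=\beta^\mu_i+\sum_jB^\mu_{ij}\mu^j$ with $(\beta^\mu,B^\mu,\gamma^\mu)$ an admissible simplex parameter set. Let $J\subseteq\{1,\dots,d\}$ be the set of indices $j$ for which $b^\mu_j=0$ on $\{\mu\in\Delta^d:\mu^j=0\}$, and $E=\{\mu\in\Delta^d:\mu^j>0\text{ for all }j\notin J\}$. Then there exists a function $\widetilde{\lambda}:E\to\mathbb{R}^{d-1}$ such that $\widetilde{b}^\mu=\widetilde{c}^\mu\widetilde{\lambda}(\mu)$ for all $\mu\in E$.
   Context: $\Delta^d$ is the unit simplex. For $\mu\in\Delta^d$, $c^\mu\in\mathbb{S}^d$ is given by $c^\mu_{ii}=\sum_{j\ne i}\gamma^\mu_{ij}\mu^i\mu^j$, $c^\mu_{ij}=-\gamma^\mu_{ij}\mu^i\mu^j$ ($i\ne j$); $\widetilde{c}^\mu$ is $c^\mu$ with the $d$-th row and column deleted and $\widetilde{b}^\mu$ is $b^\mu$ with the $d$-th entry deleted. An admissible simplex parameter set is $(\beta^\mu,B^\mu,\gamma^\mu)$ with $\gamma^\mu$ having nonnegative off-diagonal and zero diagonal entries, $(B^\mu)^\top\mathbf{1}+((\beta^\mu)^\top\mathbf{1})\mathbf{1}=0$, $\beta^\mu_i+B^\mu_{ij}\ge0$ for $i\ne j$. *)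

theory Defs
  imports Complex_Main
begin

definition unit_simplex :: "nat \<Rightarrow> (nat \<Rightarrow> real) set" where
  "unit_simplex d = {\<mu>. (\<forall>i\<in>{1..d}. 0 \<le> \<mu> i) \<and> (\<Sum>i=1..d. \<mu> i) = 1}"

definition admissible_simplex_params ::
  "nat \<Rightarrow> (nat \<Rightarrow> real) \<Rightarrow> (nat \<Rightarrow> nat \<Rightarrow> real) \<Rightarrow> (nat \<Rightarrow> nat \<Rightarrow> real) \<Rightarrow> bool" where
  "admissible_simplex_params d \<beta> B \<gamma> \<longleftrightarrow>
     (\<forall>i\<in>{1..d}. \<forall>j\<in>{1..d}. \<gamma> i j = \<gamma> j i) \<and>
     (\<forall>i\<in>{1..d}. \<gamma> i i = 0) \<and>
     (\<forall>i\<in>{1..d}. \<forall>j\<in>{1..d}. i \<noteq> j \<longrightarrow> 0 \<le> \<gamma> i j) \<and>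
     (\<forall>j\<in>{1..d}. (\<Sum>i=1..d. B i j) + (\<Sum>i=1..d. \<beta> i) = 0) \<and>
     (\<forall>i\<in>{1..d}. \<forall>j\<in>{1..d}. i \<noteq> j \<longrightarrow> 0 \<le> \<beta> i + B i j)"

definition drift_b :: "nat \<Rightarrow> (nat \<Rightarrow> real) \<Rightarrow> (nat \<Rightarrow> nat \<Rightarrow> real) \<Rightarrow> (nat \<Rightarrow> real) \<Rightarrow> nat \<Rightarrow> real" where
  "drift_b d \<beta> B \<mu> i = \<beta> i + (\<Sum>j=1..d. B i j * \<mu> j)"

definition diff_c :: "nat \<Rightarrow> (nat \<Rightarrow> nat \<Rightarrow> real) \<Rightarrow> (nat \<Rightarrow> real) \<Rightarrow> nat \<Rightarrow> nat \<Rightarrow> real" where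
  "diff_c d \<gamma> \<mu> i j =
     (if i = j then (\<Sum>k\<in>{1..d} - {i}. \<gamma> i k * \<mu> i * \<mu> k)
      else - \<gamma> i j * \<mu> i * \<mu> j)"

definition J_set :: "nat \<Rightarrow> (nat \<Rightarrow> real) \<Rightarrow> (nat \<Rightarrow> nat \<Rightarrow> real) \<Rightarrow> nat set" where
  "J_set d \<beta> B = {j\<in>{1..d}. \<forall>\<mu>\<in>unit_simplex d. \<mu> j = 0 \<longrightarrow> drift_b d \<beta> B \<mu> j = 0}"

definition E_set :: "nat \<Rightarrow> (nat \<Rightarrow> real) \<Rightarrow> (nat \<Rightarrow> nat \<Rightarrow> real) \<Rightarrow> (nat \<Rightarrow> real) set" where
  "E_set d \<beta> B = {\<mu>\<in>unit_simplex d. \<forall>j\<in>{1..d} - J_set d \<beta> B. 0 < \<mu> j}"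

end

theory Submission
  imports Defs
begin

lemma lap_solve:
  fixes V :: "nat set" and w :: "nat \<Rightarrow> nat \<Rightarrow> real" and b :: "nat \<Rightarrow> real"
  assumes "finite V"
  shows "\<lbrakk>\<forall>i\<in>V. \<forall>j\<in>V. w i j = w j i; \<forall>i\<in>V. \<forall>j\<in>V. i \<noteq> j \<longrightarrow> 0 < w i j;
          (\<Sum>i\<in>V. b i) = 0\<rbrakk> \<Longrightarrow> \<exists>lam::nat\<Rightarrow>real. \<forall>i\<in>V. (\<Sum>j\<in>V. w i j * (lam i - lam j)) = b i"
  using assms
proof (induction V arbitrary: w b rule: finite_induct)
  case empty then show ?case by simp
next
  case (insert v F)
  show ?case
  proof (cases "F = {}")
    case True
    then have "b v = 0" using insert.prems(3) by simp
    then show ?thesis using True by (intro exI[of _ "\<lambda>_. 0"]) simp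
  next
    case False
    define W where "W = (\<Sum>j\<in>F. w v j)"
    have Wpos: "0 < W" unfolding W_def
    proof (rule sum_pos)
      show "finite F" "F \<noteq> {}" using insert.hyps(1) False by auto
      show "0 < w v j" if "j \<in> F" for j
        using that insert.prems(2)[rule_format, of v j] insert.hyps(2) by auto
    qed
    define w' where "w' i j = w i j + w i v * w v j / W" for i j
    define b' where "b' i = b i + w i v * b v / W" for i
    have s1: "\<forall>i\<in>F. \<forall>j\<in>F. w' i j = w' j i"
    proof (intro ballI)
      fix i j assume "i \<in> F" "j \<in> F"
      then have "w i j = w j i" "w i v = w v i" "w v j = w j v" using insert.prems(1) by blast+
      then show "w' i j = w' j i" unfolding w'_def by (simp add: mult.commute)
    qed
    have s2: "\<forall>i\<in>F. \<forall>j\<in>F. i \<noteq> j \<longrightarrow> 0 < w' i j"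
    proof (intro ballI impI)
      fix i j assume h: "i \<in> F" "j \<in> F" "i \<noteq> j"
      then have "0 < w i j" "0 < w i v" "0 < w v j"
        using insert.prems(2)[rule_format, of i j] insert.prems(2)[rule_format, of i v]
          insert.prems(2)[rule_format, of v j] insert.hyps(2) by auto
      then show "0 < w' i j" unfolding w'_def using Wpos
        by (intro add_pos_pos divide_pos_pos mult_pos_pos) auto
    qed
    have Wsym: "(\<Sum>i\<in>F. w i v) = W" unfolding W_def
      using insert.prems(1) by (intro sum.cong refl) blast
    have s3: "(\<Sum>i\<in>F. b' i) = 0"
    proof -
      have "(\<Sum>i\<in>F. b' i) = (\<Sum>i\<in>F. b i) + (\<Sum>i\<in>F. w i v) * b v / W"
        by (simp add: b'_def sum.distrib sum_distrib_right sum_divide_distrib)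
      also have "\<dots> = (\<Sum>i\<in>F. b i) + b v" using Wsym Wpos by simp
      also have "\<dots> = 0" using insert.prems(3) insert.hyps by simp
      finally show ?thesis .
    qed
    obtain l where l: "\<forall>i\<in>F. (\<Sum>j\<in>F. w' i j * (l i - l j)) = b' i"
      using insert.IH[OF s1 s2 s3] by blast
    define lv where "lv = (b v + (\<Sum>j\<in>F. w v j * l j)) / W"
    define lam where "lam = l(v := lv)"
    have lamF: "\<And>j. j \<in> F \<Longrightarrow> lam j = l j" unfolding lam_def using insert.hyps(2) by auto
    have key: "\<And>x. (\<Sum>j\<in>F. w v j * (x - l j)) = W * x - (\<Sum>j\<in>F. w v j * l j)"
      by (simp add: W_def right_diff_distrib sum_subtractf sum_distrib_right)
    show ?thesis
    proof (intro exI[of _ lam] ballI)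
      fix i assume "i \<in> insert v F"
      then consider "i = v" | "i \<in> F" by auto
      then show "(\<Sum>j\<in>insert v F. w i j * (lam i - lam j)) = b i"
      proof cases
        case 1
        have "(\<Sum>j\<in>insert v F. w i j * (lam i - lam j)) = (\<Sum>j\<in>F. w v j * (lv - l j))"
          using 1 insert.hyps lamF by (simp add: lam_def)
        also have "\<dots> = W * lv - (\<Sum>j\<in>F. w v j * l j)" by (rule key)
        also have "\<dots> = b v" using Wpos unfolding lv_def by simp
        finally show ?thesis using 1 by simp
      next
        case 2
        have iv: "i \<noteq> v" using 2 insert.hyps(2) by auto
        define Q where "Q = (\<Sum>j\<in>F. w v j * (l i - l j))"
        have h1: "(\<Sum>j\<in>insert v F. w i j * (lam i - lam j))
              = w i v * (l i - lv) + (\<Sum>j\<in>F. w i j * (l i - l j))"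
          using 2 iv insert.hyps lamF by (simp add: lam_def)
        have h2: "l i - lv = (Q - b v) / W"
          using Wpos unfolding Q_def key lv_def by (simp add: field_simps)
        have h3: "b' i = (\<Sum>j\<in>F. w i j * (l i - l j)) + w i v / W * Q"
        proof -
          have "b' i = (\<Sum>j\<in>F. w' i j * (l i - l j))" using l 2 by simp
          also have "\<dots> = (\<Sum>j\<in>F. w i j * (l i - l j)) + w i v / W * Q"
            unfolding Q_def by (simp add: w'_def distrib_right sum.distrib sum_distrib_left mult.assoc)
          finally show ?thesis .
        qed
        have h4: "w i v * ((Q - b v) / W) = w i v / W * Q - w i v * b v / W"
          by (simp add: diff_divide_distrib right_diff_distrib)
        show ?thesis unfolding h1 h2 h4 using h3 unfolding b'_def by simp
      qed
    qed
  qed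
qed

theorem mainTheorem16:
  fixes d :: nat and \<beta> :: "nat \<Rightarrow> real" and B \<gamma> :: "nat \<Rightarrow> nat \<Rightarrow> real"
  assumes "2 \<le> d"
    and "admissible_simplex_params d \<beta> B \<gamma>"
    and "\<forall>i\<in>{1..d}. \<forall>j\<in>{1..d}. i \<noteq> j \<longrightarrow> 0 < \<gamma> i j"
  shows "\<exists>lam :: (nat \<Rightarrow> real) \<Rightarrow> nat \<Rightarrow> real.
           \<forall>\<mu>\<in>E_set d \<beta> B. \<forall>i\<in>{1..d-1}.
             drift_b d \<beta> B \<mu> i = (\<Sum>j=1..d-1. diff_c d \<gamma> \<mu> i j * lam \<mu> j)"
proof -
  have gsym: "\<forall>i\<in>{1..d}. \<forall>j\<in>{1..d}. \<gamma> i j = \<gamma> j i"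
    and Bcol: "\<forall>j\<in>{1..d}. (\<Sum>i=1..d. B i j) + (\<Sum>i=1..d. \<beta> i) = 0"
    using assms(2) unfolding admissible_simplex_params_def by auto
  have "\<forall>\<mu>\<in>E_set d \<beta> B. \<exists>L. \<forall>i\<in>{1..d-1}.
          drift_b d \<beta> B \<mu> i = (\<Sum>j=1..d-1. diff_c d \<gamma> \<mu> i j * L j)"
  proof
    fix \<mu> assume hE: "\<mu> \<in> E_set d \<beta> B"
    hence smp: "\<mu> \<in> unit_simplex d" and pos: "\<forall>j\<in>{1..d} - J_set d \<beta> B. 0 < \<mu> j"
      by (auto simp: E_set_def)
    hence nn: "\<forall>i\<in>{1..d}. 0 \<le> \<mu> i" and s1: "(\<Sum>i=1..d. \<mu> i) = 1"
      by (auto simp: unit_simplex_def)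
    define b where "b = drift_b d \<beta> B \<mu>"
    have bsum: "(\<Sum>i=1..d. b i) = 0"
    proof -
      have "(\<Sum>i=1..d. b i) = (\<Sum>i=1..d. \<beta> i) + (\<Sum>i=1..d. \<Sum>j=1..d. B i j * \<mu> j)"
        by (simp add: b_def drift_b_def sum.distrib)
      also have "(\<Sum>i=1..d. \<Sum>j=1..d. B i j * \<mu> j) = (\<Sum>j=1..d. \<Sum>i=1..d. B i j * \<mu> j)"
        by (rule sum.swap)
      also have "\<dots> = (\<Sum>j=1..d. (\<Sum>i=1..d. B i j) * \<mu> j)"
        by (simp add: sum_distrib_right)
      also have "\<dots> = (\<Sum>j=1..d. (- (\<Sum>i=1..d. \<beta> i)) * \<mu> j)"
      proof (rule sum.cong[OF refl])
        fix j assume "j \<in> {1..d}"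
        then have "(\<Sum>i=1..d. B i j) + (\<Sum>i=1..d. \<beta> i) = 0" using Bcol by blast
        then have "(\<Sum>i=1..d. B i j) = - (\<Sum>i=1..d. \<beta> i)" by linarith
        then show "(\<Sum>i=1..d. B i j) * \<mu> j = (- (\<Sum>i=1..d. \<beta> i)) * \<mu> j" by simp
      qed
      also have "\<dots> = (- (\<Sum>i=1..d. \<beta> i)) * (\<Sum>j=1..d. \<mu> j)" by (rule sum_distrib_left[symmetric])
      also have "\<dots> = - (\<Sum>i=1..d. \<beta> i)" using s1 by simp
      finally show ?thesis by simp
    qed
    have bz: "\<And>i. i \<in> {1..d} \<Longrightarrow> \<mu> i = 0 \<Longrightarrow> b i = 0"
    proof -
      fix i assume i: "i \<in> {1..d}" "\<mu> i = 0"
      then have "i \<in> J_set d \<beta> B" using pos by (metis DiffI less_irrefl)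
      then show "b i = 0" using smp i unfolding J_set_def b_def by auto
    qed
    define S where "S = {j\<in>{1..d}. 0 < \<mu> j}"
    define w where "w i j = \<gamma> i j * \<mu> i * \<mu> j" for i j
    have Ssub: "S \<subseteq> {1..d}" unfolding S_def by auto
    have finS: "finite S" using Ssub finite_subset by blast
    have notS: "\<And>j. j \<in> {1..d} \<Longrightarrow> j \<notin> S \<Longrightarrow> \<mu> j = 0"
      using nn unfolding S_def by fastforce
    have bS: "(\<Sum>i\<in>S. b i) = 0"
    proof -
      have "(\<Sum>i=1..d. b i) = (\<Sum>i\<in>S. b i)"
        using Ssub notS bz by (intro sum.mono_neutral_right) auto
      then show ?thesis using bsum by simp
    qed
    have wsym: "\<forall>i\<in>S. \<forall>j\<in>S. w i j = w j i"
    proof (intro ballI)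
      fix i j assume "i \<in> S" "j \<in> S"
      then have "\<gamma> i j = \<gamma> j i" using gsym Ssub by blast
      then show "w i j = w j i" unfolding w_def by simp
    qed
    have wpos: "\<forall>i\<in>S. \<forall>j\<in>S. i \<noteq> j \<longrightarrow> 0 < w i j"
    proof (intro ballI impI)
      fix i j assume h: "i \<in> S" "j \<in> S" "i \<noteq> j"
      then have "0 < \<gamma> i j" "0 < \<mu> i" "0 < \<mu> j" using assms(3) Ssub unfolding S_def by blast+
      then show "0 < w i j" unfolding w_def by simp
    qed
    obtain l where l: "\<forall>i\<in>S. (\<Sum>j\<in>S. w i j * (l i - l j)) = b i"
      using lap_solve[OF finS wsym wpos bS] by blast
    define s where "s = (if d \<in> S then l d else 0)"
    define L where "L j = l j - s" for j
    show "\<exists>L. \<forall>i\<in>{1..d-1}. drift_b d \<beta> B \<mu> i = (\<Sum>j=1..d-1. diff_c d \<gamma> \<mu> i j * L j)"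
    proof (intro exI[of _ L] ballI)
      fix i assume hi: "i \<in> {1..d-1}"
      hence hi': "i \<in> {1..d}" "i \<noteq> d" by auto
      have rem: "\<And>f. (\<Sum>j=1..d. f j) = f i + (\<Sum>j\<in>{1..d}-{i}. f j)"
        using hi' by (simp add: sum.remove)
      have e1: "(\<Sum>j=1..d. diff_c d \<gamma> \<mu> i j * L j) = (\<Sum>j=1..d. w i j * (L i - L j))"
      proof -
        have "(\<Sum>j=1..d. diff_c d \<gamma> \<mu> i j * L j)
            = (\<Sum>k\<in>{1..d}-{i}. w i k) * L i + (\<Sum>j\<in>{1..d}-{i}. - w i j * L j)"
          unfolding rem[of "\<lambda>j. diff_c d \<gamma> \<mu> i j * L j"]
          by (intro arg_cong2[where f="(+)"] sum.cong) (auto simp: diff_c_def w_def)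
        also have "\<dots> = (\<Sum>j\<in>{1..d}-{i}. w i j * (L i - L j))"
          by (simp add: sum_distrib_right right_diff_distrib sum_subtractf sum_negf)
        also have "\<dots> = (\<Sum>j=1..d. w i j * (L i - L j))"
          unfolding rem[of "\<lambda>j. w i j * (L i - L j)"] by simp
        finally show ?thesis .
      qed
      have dd: "d = Suc (d - 1)" using assms(1) by simp
      have e2: "(\<Sum>j=1..d. diff_c d \<gamma> \<mu> i j * L j)
          = (\<Sum>j=1..d-1. diff_c d \<gamma> \<mu> i j * L j) + diff_c d \<gamma> \<mu> i d * L d"
      proof -
        obtain m where m: "d = Suc m" using assms(1) by (cases d) auto
        have "(\<Sum>j=1..Suc m. f j) = (\<Sum>j=1..m. f j) + f (Suc m)" for f :: "nat \<Rightarrow> real" by simp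
        from this[of "\<lambda>j. diff_c d \<gamma> \<mu> i j * L j"] show ?thesis unfolding m by simp
      qed
      have e3: "diff_c d \<gamma> \<mu> i d * L d = 0"
      proof (cases "d \<in> S")
        case True then show ?thesis by (simp add: L_def s_def)
      next
        case False
        then have "\<mu> d = 0" using notS assms(1) by auto
        then show ?thesis using hi' by (simp add: diff_c_def)
      qed
      have e4: "(\<Sum>j=1..d. w i j * (L i - L j)) = b i"
      proof (cases "\<mu> i = 0")
        case True then show ?thesis using bz hi' by (simp add: w_def)
      next
        case False
        then have iS: "i \<in> S" using nn hi' unfolding S_def by fastforce
        have "(\<Sum>j=1..d. w i j * (L i - L j)) = (\<Sum>j\<in>S. w i j * (l i - l j))"
        proof -
          have "(\<Sum>j=1..d. w i j * (L i - L j)) = (\<Sum>j=1..d. w i j * (l i - l j))"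
            by (simp add: L_def)
          also have "\<dots> = (\<Sum>j\<in>S. w i j * (l i - l j))"
            using Ssub notS by (intro sum.mono_neutral_right) (auto simp: w_def)
          finally show ?thesis .
        qed
        then show ?thesis using l iS by simp
      qed
      show "drift_b d \<beta> B \<mu> i = (\<Sum>j=1..d-1. diff_c d \<gamma> \<mu> i j * L j)"
        using e1 e2 e3 e4 unfolding b_def by simp
    qed
  qed
  then show ?thesis by (rule bchoice)
qed

end
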